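(* Let $G$ be a group such that $Q=\mathrm{Core}(G)$ is latin, and let $\theta:G\times G\to G$ be given by $\theta_{x,y}=xy^{-1}$ (a quandle cocycle of $Q$ with values in $G$). Then $\theta$ is cohomologous to the trivial cocycle if and only if $G$ is abelian.
   Context: $\mathrm{Core}(G)$ is the quandle on $G$ with $x*y=xy^{-1}x$; a quandle is latin if every right translation $y\mapsto y*x$ is bijective. A quandle cocycle of a quandle $Q$ with values in $G$ is $\theta:Q\times Q\to G$ with $\theta_{x*y,x*z}\theta_{x,z}=\theta_{x,y*z}\theta_{y,z}$ and $\theta_{x,x}=1$; $\theta$ is cohomologous to the trivial cocycle (constantly $1$) if there exists $\gamma:Q\to G$ with $\theta_{x,y}=\gamma_{x*y}\gamma_y^{-1}$ for all $x,y\in Q$. *)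

theory Defs
  imports "HOL-Algebra.Group"
begin

definition core_op :: "('a, 'b) monoid_scheme \<Rightarrow> 'a \<Rightarrow> 'a \<Rightarrow> 'a" where
  "core_op G x y = x \<otimes>\<^bsub>G\<^esub> inv\<^bsub>G\<^esub> y \<otimes>\<^bsub>G\<^esub> x"

definition latin_quandle :: "'a set \<Rightarrow> ('a \<Rightarrow> 'a \<Rightarrow> 'a) \<Rightarrow> bool" where
  "latin_quandle Q op \<longleftrightarrow> (\<forall>x\<in>Q. bij_betw (\<lambda>y. op y x) Q Q)"

definition quandle_cocycle ::
  "'a set \<Rightarrow> ('a \<Rightarrow> 'a \<Rightarrow> 'a) \<Rightarrow> ('g, 'c) monoid_scheme \<Rightarrow> ('a \<Rightarrow> 'a \<Rightarrow> 'g) \<Rightarrow> bool" where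
  "quandle_cocycle Q op H \<theta> \<longleftrightarrow>
     (\<forall>x\<in>Q. \<forall>y\<in>Q. \<theta> x y \<in> carrier H) \<and>
     (\<forall>x\<in>Q. \<forall>y\<in>Q. \<forall>z\<in>Q.
        \<theta> (op x y) (op x z) \<otimes>\<^bsub>H\<^esub> \<theta> x z = \<theta> x (op y z) \<otimes>\<^bsub>H\<^esub> \<theta> y z) \<and>
     (\<forall>x\<in>Q. \<theta> x x = \<one>\<^bsub>H\<^esub>)"

definition cohomologous_to_trivial ::
  "'a set \<Rightarrow> ('a \<Rightarrow> 'a \<Rightarrow> 'a) \<Rightarrow> ('g, 'c) monoid_scheme \<Rightarrow> ('a \<Rightarrow> 'a \<Rightarrow> 'g) \<Rightarrow> bool" where
  "cohomologous_to_trivial Q op H \<theta> \<longleftrightarrow>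
     (\<exists>\<gamma>. (\<forall>x\<in>Q. \<gamma> x \<in> carrier H) \<and>
        (\<forall>x\<in>Q. \<forall>y\<in>Q. \<theta> x y = \<gamma> (op x y) \<otimes>\<^bsub>H\<^esub> inv\<^bsub>H\<^esub> (\<gamma> y)))"

end

theory Submission
  imports Defs
begin

lemma (in group) cancel_simps [simp]:
  "x \<in> carrier G \<Longrightarrow> a \<in> carrier G \<Longrightarrow> x \<otimes> (inv x \<otimes> a) = a"
  "x \<in> carrier G \<Longrightarrow> a \<in> carrier G \<Longrightarrow> inv x \<otimes> (x \<otimes> a) = a"
  by (simp_all add: m_assoc[symmetric])

lemma cocycle_part:
  fixes G (structure)
  assumes G: "group G"
  shows "quandle_cocycle (carrier G) (core_op G) G (\<lambda>x y. x \<otimes>\<^bsub>G\<^esub> inv\<^bsub>G\<^esub> y)"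
proof -
  interpret group G by (rule G)
  have "x \<otimes> inv y \<otimes> x \<otimes> inv (x \<otimes> inv z \<otimes> x) \<otimes> (x \<otimes> inv z) =
        x \<otimes> inv (y \<otimes> inv z \<otimes> y) \<otimes> (y \<otimes> inv z)"
    if "x \<in> carrier G" "y \<in> carrier G" "z \<in> carrier G" for x y z
    using that by (simp add: inv_mult_group m_assoc)
  then show ?thesis
    unfolding quandle_cocycle_def core_op_def by auto
qed

lemma sq_bij:
  fixes G (structure)
  assumes G: "group G" and L: "latin_quandle (carrier G) (core_op G)"
  shows "bij_betw (\<lambda>y. y \<otimes> y) (carrier G) (carrier G)"
proof -
  interpret group G by (rule G)
  have b: "bij_betw (\<lambda>y. core_op G y \<one>) (carrier G) (carrier G)"
    using L one_closed unfolding latin_quandle_def by blast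
  have eq: "bij_betw (\<lambda>y. core_op G y \<one>) (carrier G) (carrier G) =
            bij_betw (\<lambda>y. y \<otimes> y) (carrier G) (carrier G)"
    by (rule bij_betw_cong) (simp add: core_op_def)
  show ?thesis using b eq by simp
qed

lemma sq_surj:
  fixes G (structure)
  assumes G: "group G" and L: "latin_quandle (carrier G) (core_op G)"
    and z: "z \<in> carrier G"
  shows "\<exists>w\<in>carrier G. z = w \<otimes> w"
proof -
  have "z \<in> (\<lambda>y. y \<otimes> y) ` carrier G"
    using bij_betw_imp_surj_on[OF sq_bij[OF G L]] z by simp
  then show ?thesis by (rule imageE) blast
qed

lemma sq_inj:
  fixes G (structure)
  assumes G: "group G" and L: "latin_quandle (carrier G) (core_op G)"
  shows "inj_on (\<lambda>y. y \<otimes> y) (carrier G)"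
  by (rule bij_betw_imp_inj_on[OF sq_bij[OF G L]])

lemma coh_imp_comm:
  fixes G (structure)
  assumes G: "group G" and L: "latin_quandle (carrier G) (core_op G)"
    and C: "cohomologous_to_trivial (carrier G) (core_op G) G (\<lambda>x y. x \<otimes>\<^bsub>G\<^esub> inv\<^bsub>G\<^esub> y)"
  shows "comm_group G"
proof -
  interpret group G by (rule G)
  obtain \<gamma> where gc: "\<forall>x\<in>carrier G. \<gamma> x \<in> carrier G"
    and ge: "\<forall>x\<in>carrier G. \<forall>y\<in>carrier G. x \<otimes> inv y = \<gamma> (x \<otimes> inv y \<otimes> x) \<otimes> inv (\<gamma> y)"
    using C unfolding cohomologous_to_trivial_def core_op_def by auto
  have gen: "\<gamma> (x \<otimes> inv y \<otimes> x) = x \<otimes> inv y \<otimes> \<gamma> y"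
    if x: "x \<in> carrier G" and y: "y \<in> carrier G" for x y
  proof -
    have "x \<otimes> inv y = \<gamma> (x \<otimes> inv y \<otimes> x) \<otimes> inv (\<gamma> y)" using ge x y by blast
    moreover have "x \<otimes> inv y \<in> carrier G" "\<gamma> (x \<otimes> inv y \<otimes> x) \<in> carrier G" "\<gamma> y \<in> carrier G"
      using x y gc by auto
    ultimately show ?thesis using inv_solve_right by blast
  qed
  define c where "c = \<gamma> \<one>"
  have cc: "c \<in> carrier G" using gc c_def by auto
  have sq: "\<gamma> (v \<otimes> v) = v \<otimes> c" if v: "v \<in> carrier G" for v
    using gen[OF v one_closed] v by (simp add: c_def)
  have comm1: "inv u \<otimes> x = x \<otimes> inv u" if x: "x \<in> carrier G" and u: "u \<in> carrier G" for x u
  proof -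
    obtain w where w: "w \<in> carrier G" "x \<otimes> inv (u \<otimes> u) \<otimes> x = w \<otimes> w"
      using sq_surj[OF G L, of "x \<otimes> inv (u \<otimes> u) \<otimes> x"] x u by auto
    have "\<gamma> (x \<otimes> inv (u \<otimes> u) \<otimes> x) = x \<otimes> inv (u \<otimes> u) \<otimes> (u \<otimes> c)"
      using gen[of x "u \<otimes> u"] sq[OF u] x u by simp
    also have "\<dots> = x \<otimes> inv u \<otimes> c"
    proof -
      have "inv u \<otimes> (u \<otimes> c) = c" using u cc by (simp add: m_assoc[symmetric])
      then show ?thesis using x u cc by (simp add: inv_mult_group m_assoc)
    qed
    finally have "w \<otimes> c = x \<otimes> inv u \<otimes> c" using w sq by simp
    then have "w = x \<otimes> inv u" using w x u cc by simp
    then have wd: "w \<otimes> w = x \<otimes> ((inv u \<otimes> x \<otimes> inv u))" using x u by (simp add: m_assoc)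
    have "x \<otimes> (inv u \<otimes> inv u \<otimes> x) = w \<otimes> w"
      using w(2) x u by (simp add: inv_mult_group m_assoc)
    then have "x \<otimes> (inv u \<otimes> inv u \<otimes> x) = x \<otimes> (inv u \<otimes> x \<otimes> inv u)" using wd by simp
    then have "inv u \<otimes> inv u \<otimes> x = inv u \<otimes> x \<otimes> inv u"
      using x u by (simp add: Units_eq)
    then have "inv u \<otimes> (inv u \<otimes> x) = inv u \<otimes> (x \<otimes> inv u)"
      using x u by (simp add: m_assoc)
    then show "inv u \<otimes> x = x \<otimes> inv u" using x u by simp
  qed
  show ?thesis
  proof (rule group.group_comm_groupI[OF G])
    fix x y assume "x \<in> carrier G" "y \<in> carrier G"
    then show "x \<otimes> y = y \<otimes> x" using comm1[of x "inv y"] by simp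
  qed
qed

lemma comm_imp_coh:
  fixes G (structure)
  assumes G: "comm_group G" and L: "latin_quandle (carrier G) (core_op G)"
  shows "cohomologous_to_trivial (carrier G) (core_op G) G (\<lambda>x y. x \<otimes>\<^bsub>G\<^esub> inv\<^bsub>G\<^esub> y)"
proof -
  interpret comm_group G by (rule G)
  define s where "s = inv_into (carrier G) (\<lambda>y. y \<otimes> y)"
  have s: "s z \<in> carrier G \<and> s z \<otimes> s z = z" if "z \<in> carrier G" for z
  proof -
    have "z \<in> (\<lambda>y. y \<otimes> y) ` carrier G" using sq_surj[OF is_group L that] by auto
    then have "(\<lambda>y. y \<otimes> y) (s z) = z" "s z \<in> carrier G" unfolding s_def
      by (rule f_inv_into_f, rule inv_into_into)
    then show ?thesis by simp
  qed
  have inj: "inj_on (\<lambda>y. y \<otimes> y) (carrier G)" by (rule sq_inj[OF is_group L])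
  have "s (x \<otimes> inv y \<otimes> x) \<otimes> inv (s y) = x \<otimes> inv y"
    if x: "x \<in> carrier G" and y: "y \<in> carrier G" for x y
  proof -
    have sy: "s y \<in> carrier G" "s y \<otimes> s y = y" using s[OF y] by auto
    have sz: "s (x \<otimes> inv y \<otimes> x) \<in> carrier G" "s (x \<otimes> inv y \<otimes> x) \<otimes> s (x \<otimes> inv y \<otimes> x) = x \<otimes> inv y \<otimes> x"
      using s[of "x \<otimes> inv y \<otimes> x"] x y by auto
    have "x \<otimes> inv y \<otimes> s y \<otimes> (x \<otimes> inv y \<otimes> s y) = x \<otimes> inv y \<otimes> x \<otimes> inv y \<otimes> (s y \<otimes> s y)"
      using x y sy(1) by (simp add: m_ac)
    also have "\<dots> = x \<otimes> inv y \<otimes> x" using x y sy by (simp add: m_assoc)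
    finally have eq: "s (x \<otimes> inv y \<otimes> x) \<otimes> s (x \<otimes> inv y \<otimes> x) = x \<otimes> inv y \<otimes> s y \<otimes> (x \<otimes> inv y \<otimes> s y)"
      using sz by simp
    have a: "s (x \<otimes> inv y \<otimes> x) = x \<otimes> inv y \<otimes> s y"
      using inj_onD[OF inj eq] sz x y sy by simp
    show ?thesis using a x y sy by (simp add: m_assoc)
  qed
  then show ?thesis unfolding cohomologous_to_trivial_def core_op_def
    using s by (intro exI[of _ s]) auto
qed

theorem proposition4p5:
  fixes G :: "('a, 'b) monoid_scheme"
  assumes "group G"
    and "latin_quandle (carrier G) (core_op G)"
  shows "quandle_cocycle (carrier G) (core_op G) G (\<lambda>x y. x \<otimes>\<^bsub>G\<^esub> inv\<^bsub>G\<^esub> y)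
       \<and> (cohomologous_to_trivial (carrier G) (core_op G) G (\<lambda>x y. x \<otimes>\<^bsub>G\<^esub> inv\<^bsub>G\<^esub> y)
            \<longleftrightarrow> comm_group G)"
  using cocycle_part[OF assms(1)] coh_imp_comm[OF assms] comm_imp_coh[OF _ assms(2)] by blast

end
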